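(* Let $\mathcal S$ be any one of the five step sets $\mathcal A,\mathcal B,\mathcal C,\mathcal D,\mathcal E$, let $k\ge0$ and $Q_k\in S_k$. Then $\sum_{n\ge0}\#_{\mathcal S}\{(0,0)\xrightarrow{n}Q_k\}\,2^{-n}\in\mathbb Q$.
   Context: Let $\mathbb N=\{0,1,2,\dots\}$. For a step set $\mathcal S$, $\#_{\mathcal S}\{(0,0)\xrightarrow{n}(i,j)\}$ is the number of sequences $p_0=(0,0),p_1,\dots,p_n=(i,j)$ of points of $\mathbb N^2$ with $p_m-p_{m-1}\in\mathcal S$ for all $m$. The step sets are $\mathcal A=\{(-1,1),(1,1),(1,-1)\}$, $\mathcal B=\{(-1,1),(0,1),(1,0),(1,-1)\}$, $\mathcal C=\{(-1,1),(0,1),(1,1),(1,0),(1,-1)\}$, $\mathcal D=\{(-1,1),(0,1),(1,-1)\}$, $\mathcal E=\{(-1,1),(0,1),(1,1),(1,-1)\}$. For $k\ge0$, $S_k=\{(k-i,i):0\le i\le k\}$. *)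

theory Defs
  imports Complex_Main
begin

type_synonym pt = "int \<times> int"

definition inN2 :: "pt \<Rightarrow> bool" where
  "inN2 p \<longleftrightarrow> fst p \<ge> 0 \<and> snd p \<ge> 0"

definition stepdiff :: "pt \<Rightarrow> pt \<Rightarrow> pt" where
  "stepdiff a b = (fst b - fst a, snd b - snd a)"

definition num_walks :: "pt set \<Rightarrow> nat \<Rightarrow> pt \<Rightarrow> nat" where
  "num_walks S n Q = card {ps :: pt list. length ps = Suc n \<and> ps ! 0 = (0,0) \<and> ps ! n = Q
       \<and> (\<forall>m\<le>n. inN2 (ps ! m))
       \<and> (\<forall>m<n. stepdiff (ps ! m) (ps ! Suc m) \<in> S)}"

definition stepA :: "pt set" where "stepA = {(-1,1),(1,1),(1,-1)}"
definition stepB :: "pt set" where "stepB = {(-1,1),(0,1),(1,0),(1,-1)}"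
definition stepC :: "pt set" where "stepC = {(-1,1),(0,1),(1,1),(1,0),(1,-1)}"
definition stepD :: "pt set" where "stepD = {(-1,1),(0,1),(1,-1)}"
definition stepE :: "pt set" where "stepE = {(-1,1),(0,1),(1,1),(1,-1)}"

definition diagS :: "nat \<Rightarrow> pt set" where
  "diagS k = {(int (k - i), int i) | i. i \<le> k}"

end

theory Submission
  imports Defs
begin

definition padd :: "pt \<Rightarrow> pt \<Rightarrow> pt" where "padd p s = (fst p + fst s, snd p + snd s)"

fun hw :: "pt set \<Rightarrow> pt \<Rightarrow> nat \<Rightarrow> pt \<Rightarrow> nat" where
  "hw S Q 0 p = (if p = Q then 1 else 0)"
| "hw S Q (Suc n) p = (\<Sum>s\<in>{s\<in>S. inN2 (padd p s)}. hw S Q n (padd p s))"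

definition W :: "pt set \<Rightarrow> pt \<Rightarrow> nat \<Rightarrow> pt \<Rightarrow> pt list set" where
  "W S p n Q = {ps :: pt list. length ps = Suc n \<and> ps ! 0 = p \<and> ps ! n = Q
       \<and> (\<forall>m\<le>n. inN2 (ps ! m))
       \<and> (\<forall>m<n. stepdiff (ps ! m) (ps ! Suc m) \<in> S)}"

lemma num_walks_W: "num_walks S n Q = card (W S (0,0) n Q)"
  unfolding num_walks_def W_def by simp

lemma all_le_Suc: "(\<forall>m\<le>Suc n. P m) \<longleftrightarrow> P 0 \<and> (\<forall>m\<le>n. P (Suc m))"
  by (metis Suc_le_mono le0 not0_implies_Suc)

lemma all_less_Suc': "(\<forall>m<Suc n. P m) \<longleftrightarrow> P 0 \<and> (\<forall>m<n. P (Suc m))"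
  using All_less_Suc2 by blast

lemma Cons_in_W:
  "p # ps \<in> W S p (Suc n) Q \<longleftrightarrow> inN2 p \<and> ps \<noteq> [] \<and> stepdiff p (hd ps) \<in> S \<and> ps \<in> W S (hd ps) n Q"
proof (cases ps)
  case Nil then show ?thesis by (simp add: W_def)
next
  case (Cons a as)
  then show ?thesis unfolding W_def by (simp add: all_le_Suc all_less_Suc' conj_ac)
qed

lemma W_hd: "ps \<in> W S q n Q \<Longrightarrow> ps \<noteq> [] \<and> hd ps = q \<and> inN2 q"
  unfolding W_def by (cases ps) auto

lemma W_notN2: "\<not> inN2 p \<Longrightarrow> W S p n Q = {}"
  using W_hd by blast

lemma W_0: "W S p 0 Q = (if p = Q \<and> inN2 p then {[p]} else {})"
  unfolding W_def by (auto simp: length_Suc_conv)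

lemma padd_stepdiff: "padd p (stepdiff p q) = q" "stepdiff p (padd p s) = s"
  by (auto simp: padd_def stepdiff_def)

lemma padd_inj: "padd p s = padd p t \<Longrightarrow> s = t"
  by (auto simp: padd_def prod_eq_iff)

lemma W_Suc:
  assumes "inN2 p"
  shows "W S p (Suc n) Q = (\<Union>s\<in>{s\<in>S. inN2 (padd p s)}. Cons p ` W S (padd p s) n Q)"
proof (rule set_eqI, rule iffI)
  fix x assume x: "x \<in> W S p (Suc n) Q"
  then obtain ps where xps: "x = p # ps" using W_hd by (metis list.collapse)
  with x have c: "inN2 p \<and> ps \<noteq> [] \<and> stepdiff p (hd ps) \<in> S \<and> ps \<in> W S (hd ps) n Q"
    using Cons_in_W by blast
  then have "inN2 (hd ps)" using W_hd by blast
  then show "x \<in> (\<Union>s\<in>{s\<in>S. inN2 (padd p s)}. Cons p ` W S (padd p s) n Q)"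
    using c xps padd_stepdiff by (intro UN_I[of "stepdiff p (hd ps)"]) auto
next
  fix x assume "x \<in> (\<Union>s\<in>{s\<in>S. inN2 (padd p s)}. Cons p ` W S (padd p s) n Q)"
  then obtain s ps where s: "s \<in> S" "x = p # ps" "ps \<in> W S (padd p s) n Q" by auto
  then have "hd ps = padd p s" "ps \<noteq> []" using W_hd by blast+
  then show "x \<in> W S p (Suc n) Q" using s Cons_in_W assms padd_stepdiff by metis
qed

lemma W_card:
  assumes "finite S"
  shows "finite (W S p n Q) \<and> (inN2 p \<longrightarrow> card (W S p n Q) = hw S Q n p)"
proof (induction n arbitrary: p)
  case 0
  then show ?case by (simp add: W_0)
next
  case (Suc n)
  show ?case
  proof (cases "inN2 p")
    case False then show ?thesis by (simp add: W_notN2)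
  next
    case True
    let ?I = "{s\<in>S. inN2 (padd p s)}"
    have fI: "finite ?I" using assms by simp
    have disj: "\<forall>i\<in>?I. \<forall>j\<in>?I. i \<noteq> j \<longrightarrow> Cons p ` W S (padd p i) n Q \<inter> Cons p ` W S (padd p j) n Q = {}"
    proof (intro ballI impI)
      fix i j :: pt assume ij: "i \<noteq> j"
      show "Cons p ` W S (padd p i) n Q \<inter> Cons p ` W S (padd p j) n Q = {}"
      proof (rule ccontr)
        assume "Cons p ` W S (padd p i) n Q \<inter> Cons p ` W S (padd p j) n Q \<noteq> {}"
        then obtain ps where "ps \<in> W S (padd p i) n Q" "ps \<in> W S (padd p j) n Q" by auto
        then have "padd p i = padd p j" using W_hd by metis
        then show False using ij padd_inj by blast
      qed
    qed
    have "card (W S p (Suc n) Q) = (\<Sum>s\<in>?I. card (Cons p ` W S (padd p s) n Q))"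
      unfolding W_Suc[OF True]
      by (rule card_UN_disjoint[OF fI _ disj]) (use Suc in auto)
    also have "\<dots> = (\<Sum>s\<in>?I. hw S Q n (padd p s))"
      using Suc by (intro sum.cong refl) (simp add: card_image)
    finally show ?thesis using Suc fI unfolding W_Suc[OF True] by simp
  qed
qed


definition U :: "pt set" where "U = {(-1,1),(1,-1),(0,1),(1,0),(1,1)}"

lemma hw_zero:
  assumes "S \<subseteq> U"
  shows "fst p + snd p > fst Q + snd Q \<Longrightarrow> hw S Q n p = 0"
proof (induction n arbitrary: p)
  case 0 then show ?case by auto
next
  case (Suc n)
  have "\<And>s. s \<in> S \<Longrightarrow> fst (padd p s) + snd (padd p s) > fst Q + snd Q"
    using assms Suc.prems by (auto simp: U_def padd_def)
  then show ?case using Suc.IH by simp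
qed

definition phi :: "int \<Rightarrow> pt \<Rightarrow> real" where
  "phi k p = (if inN2 p \<and> fst p + snd p \<le> k then
     2 * (3 * (real_of_int k + 2)^2) ^ nat (k - fst p - snd p) * (real_of_int (fst p) + 1) * (real_of_int (snd p) + 1) else 0)"

lemma phi_nonneg: "0 \<le> phi k p"
  unfolding phi_def inN2_def by auto

lemma phi_up:
  assumes "inN2 p" "fst p + snd p \<le> k" "fst q + snd q > fst p + snd p"
  shows "phi k q \<le> (2/3) * (3 * (real_of_int k + 2)^2) ^ nat (k - fst p - snd p)"
proof (cases "inN2 q \<and> fst q + snd q \<le> k")
  case False
  then have "phi k q = 0" unfolding phi_def by meson
  moreover have "0 \<le> (3 * (real_of_int k + 2)^2) ^ nat (k - fst p - snd p)" by simp
  ultimately show ?thesis by simp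
next
  case True
  define B where "B = 3 * (real_of_int k + 2)^2"
  define a where "a = nat (k - fst q - snd q)"
  define b where "b = nat (k - fst p - snd p)"
  have k0: "k \<ge> 0" using assms unfolding inN2_def by auto
  have "1 \<le> (real_of_int k + 2)^2" using k0 by (intro one_le_power) auto
  then have B1: "B \<ge> 1" unfolding B_def by simp
  have ab: "b \<ge> Suc a" unfolding a_def b_def using assms True by auto
  have "B ^ b \<ge> B ^ Suc a" using power_increasing[OF ab B1] .
  then have Bb: "B ^ b \<ge> B * B ^ a" by simp
  have xq: "real_of_int (fst q) + 1 \<le> real_of_int k + 2" "0 \<le> real_of_int (fst q) + 1"
    "real_of_int (snd q) + 1 \<le> real_of_int k + 2" "0 \<le> real_of_int (snd q) + 1"
    using True unfolding inN2_def by auto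
  have pr: "(real_of_int (fst q) + 1) * (real_of_int (snd q) + 1) \<le> (real_of_int k + 2)^2"
    unfolding power2_eq_square by (rule mult_mono) (use xq in auto)
  have "phi k q = 2 * B ^ a * ((real_of_int (fst q) + 1) * (real_of_int (snd q) + 1))"
    using True unfolding phi_def B_def a_def by simp
  also have "\<dots> \<le> 2 * B ^ a * (real_of_int k + 2)^2"
    using pr B1 by (intro mult_left_mono) auto
  also have "\<dots> = (2/3) * (B * B ^ a)" unfolding B_def by simp
  also have "\<dots> \<le> (2/3) * B ^ b" using Bb by simp
  finally show ?thesis unfolding B_def b_def .
qed

lemma sum_U: "(\<Sum>s\<in>U. f s) = f (-1,1) + f (1,-1) + f (0,1) + f (1,0) + (f (1,1) :: real)"
  unfolding U_def by simp

lemma super: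
  assumes "inN2 p" "inN2 Q"
  shows "(if p = Q then 1 else 0) + (1/2) * (\<Sum>s\<in>U. phi (fst Q + snd Q) (padd p s)) \<le> phi (fst Q + snd Q) p"
proof -
  define k where "k = fst Q + snd Q"
  obtain x y where p: "p = (x, y)" by fastforce
  have x0: "x \<ge> 0" "y \<ge> 0" using assms p unfolding inN2_def by auto
  show ?thesis
  proof (cases "x + y \<le> k")
    case False
    then have "p \<noteq> Q" using p k_def by auto
    then show ?thesis using False unfolding sum_U k_def[symmetric]
      by (simp add: phi_def padd_def p)
  next
    case True
    define E where "E = (3 * (real_of_int k + 2)^2) ^ nat (k - x - y)"
    have k0: "k \<ge> 0" using True x0 by auto
    have "1 \<le> (real_of_int k + 2)^2" using k0 by (intro one_le_power) auto
    then have E1: "E \<ge> 1" unfolding E_def by (intro one_le_power) simp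
    have d1: "phi k (padd p (-1,1)) = 2 * E * x * (y + 2)"
      using True x0 unfolding phi_def padd_def p E_def inN2_def
      by (cases "x = 0") (auto simp: algebra_simps)
    have d2: "phi k (padd p (1,-1)) = 2 * E * (x + 2) * y"
      using True x0 unfolding phi_def padd_def p E_def inN2_def
      by (cases "y = 0") (auto simp: algebra_simps)
    have u: "phi k (padd p s) \<le> (2/3) * E" if "s \<in> {(0,1),(1,0),(1,1)}" for s
      unfolding E_def using phi_up[of p k "padd p s"] that assms True p
      by (auto simp: padd_def)
    have u1: "phi k (padd p (0,1)) \<le> (2/3) * E" and u2: "phi k (padd p (1,0)) \<le> (2/3) * E"
      and u3: "phi k (padd p (1,1)) \<le> (2/3) * E" using u by auto
    have ph: "phi k p = 2 * E * (x + 1) * (y + 1)"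
      using True x0 unfolding phi_def p E_def inN2_def by simp
    have "(if p = Q then 1 else 0) \<le> E" using E1 by simp
    then show ?thesis unfolding sum_U k_def[symmetric] d1 d2 ph
      using u1 u2 u3 by (simp add: algebra_simps)
  qed
qed


lemma hw_bound:
  assumes "finite S" "S \<subseteq> U" "inN2 Q"
  shows "inN2 p \<Longrightarrow> (\<Sum>m<N. real (hw S Q m p) / 2^m) \<le> phi (fst Q + snd Q) p"
proof (induction N arbitrary: p)
  case 0
  then show ?case by (simp add: phi_nonneg)
next
  case (Suc N)
  let ?I = "{s\<in>S. inN2 (padd p s)}"
  let ?k = "fst Q + snd Q"
  have "(\<Sum>m<Suc N. real (hw S Q m p) / 2^m)
      = (if p = Q then 1 else 0) + (\<Sum>m<N. real (hw S Q (Suc m) p) / 2^(Suc m))"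
    unfolding sum.lessThan_Suc_shift by simp
  also have "(\<Sum>m<N. real (hw S Q (Suc m) p) / 2^(Suc m))
      = (\<Sum>m<N. (1/2) * (\<Sum>s\<in>?I. real (hw S Q m (padd p s)) / 2^m))"
    by (intro sum.cong refl) (simp add: sum_divide_distrib mult.commute)
  also have "\<dots> = (1/2) * (\<Sum>s\<in>?I. \<Sum>m<N. real (hw S Q m (padd p s)) / 2^m)"
    by (subst sum.swap) (simp add: sum_distrib_left)
  also have "(\<Sum>s\<in>?I. \<Sum>m<N. real (hw S Q m (padd p s)) / 2^m) \<le> (\<Sum>s\<in>?I. phi ?k (padd p s))"
    by (intro sum_mono Suc.IH) auto
  also have "\<dots> \<le> (\<Sum>s\<in>U. phi ?k (padd p s))"
    using assms by (intro sum_mono2) (auto simp: phi_nonneg U_def)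
  finally show ?case using super[OF Suc.prems assms(3)] by simp
qed

lemma hw_summable:
  assumes "finite S" "S \<subseteq> U" "inN2 Q" "inN2 p"
  shows "summable (\<lambda>m. real (hw S Q m p) / 2^m)"
  by (rule summableI_nonneg_bounded[where x = "phi (fst Q + snd Q) p"])
     (use hw_bound[OF assms] in auto)

definition G :: "pt set \<Rightarrow> pt \<Rightarrow> pt \<Rightarrow> real" where
  "G S Q p = (if inN2 p then (\<Sum>m. real (hw S Q m p) / 2^m) else 0)"

lemma G_rec:
  assumes "finite S" "S \<subseteq> U" "inN2 Q" "inN2 p"
  shows "G S Q p = (if p = Q then 1 else 0) + (1/2) * (\<Sum>s\<in>S. G S Q (padd p s))"
proof -
  let ?I = "{s\<in>S. inN2 (padd p s)}"
  define f where "f = (\<lambda>m. real (hw S Q m p) / 2^m)"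
  define g where "g = (\<lambda>s m. real (hw S Q m (padd p s)) / 2^m)"
  have sf: "summable f" unfolding f_def by (rule hw_summable[OF assms])
  have sg: "\<And>s. s \<in> ?I \<Longrightarrow> summable (g s)"
    unfolding g_def using hw_summable[OF assms(1-3)] by auto
  have fS: "\<And>m. f (Suc m) = (1/2) * (\<Sum>s\<in>?I. g s m)"
    unfolding f_def g_def by (simp add: sum_divide_distrib mult.commute)
  have "suminf f = f 0 + (\<Sum>m. f (Suc m))" using suminf_split_head[OF sf] by simp
  also have "(\<Sum>m. f (Suc m)) = (1/2) * (\<Sum>m. \<Sum>s\<in>?I. g s m)"
    unfolding fS by (intro suminf_mult summable_sum sg)
  also have "(\<Sum>m. \<Sum>s\<in>?I. g s m) = (\<Sum>s\<in>?I. suminf (g s))"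
    by (intro suminf_sum sg)
  also have "\<dots> = (\<Sum>s\<in>?I. G S Q (padd p s))"
    unfolding g_def G_def by (intro sum.cong refl) auto
  also have "\<dots> = (\<Sum>s\<in>S. G S Q (padd p s))"
    using assms(1) by (simp add: sum.inter_filter G_def)
  finally show ?thesis using assms(4) unfolding G_def f_def by simp
qed

lemma G_zero:
  assumes "S \<subseteq> U" "fst p + snd p > fst Q + snd Q"
  shows "G S Q p = 0"
  unfolding G_def using hw_zero[OF assms] by simp


lemma tridiag_rat:
  fixes g c :: "nat \<Rightarrow> real"
  assumes g0: "g 0 = 0" and gL: "g (Suc L) = 0"
    and rec: "\<And>m. m < L \<Longrightarrow> g (Suc (Suc m)) = 2 * g (Suc m) - c m - g m"
    and cr: "\<And>m. m < L \<Longrightarrow> c m \<in> \<rat>"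
  shows "m \<le> Suc L \<Longrightarrow> g m \<in> \<rat>"
proof -
  have A: "m \<le> Suc L \<Longrightarrow> g m - of_nat m * g 1 \<in> \<rat> \<and>
      (Suc m \<le> Suc L \<longrightarrow> g (Suc m) - of_nat (Suc m) * g 1 \<in> \<rat>)" for m
  proof (induction m)
    case 0 then show ?case using g0 by simp
  next
    case (Suc m)
    then have h: "g m - of_nat m * g 1 \<in> \<rat>" "g (Suc m) - of_nat (Suc m) * g 1 \<in> \<rat>" by auto
    have "Suc (Suc m) \<le> Suc L \<longrightarrow> g (Suc (Suc m)) - of_nat (Suc (Suc m)) * g 1 \<in> \<rat>"
    proof
      assume "Suc (Suc m) \<le> Suc L"
      then have mL: "m < L" by simp
      have eq: "g (Suc (Suc m)) - of_nat (Suc (Suc m)) * g 1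
          = 2 * (g (Suc m) - of_nat (Suc m) * g 1) - c m - (g m - of_nat m * g 1)"
        using rec[OF mL] by (simp add: algebra_simps)
      show "g (Suc (Suc m)) - of_nat (Suc (Suc m)) * g 1 \<in> \<rat>"
        unfolding eq by (rule Rats_diff[OF Rats_diff[OF Rats_mult[OF Rats_number_of h(2)] cr[OF mL]] h(1)])
    qed
    then show ?case using h by simp
  qed
  have "g (Suc L) - of_nat (Suc L) * g 1 \<in> \<rat>" using A[of "Suc L"] by simp
  then have "- (of_nat (Suc L) * g 1) \<in> \<rat>" using gL by simp
  then have "of_nat (Suc L) * g 1 \<in> \<rat>" by (simp only: Rats_minus_iff)
  then have "(of_nat (Suc L) * g 1) / of_nat (Suc L) \<in> \<rat>" by (rule Rats_divide) simp
  moreover have e: "g 1 = (of_nat (Suc L) * g 1) / of_nat (Suc L)" by simp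
  ultimately have g1: "g 1 \<in> \<rat>" by metis
  assume "m \<le> Suc L"
  then have "g m - of_nat m * g 1 \<in> \<rat>" using A by blast
  then have "(g m - of_nat m * g 1) + of_nat m * g 1 \<in> \<rat>" using g1 by (intro Rats_add Rats_mult Rats_of_nat)
  then show "g m \<in> \<rat>" by simp
qed

definition Dg :: "pt set" where "Dg = {(-1,1),(1,-1)}"
definition Up :: "pt set" where "Up = {(0,1),(1,0),(1,1)}"

lemma G_rat:
  assumes T: "T \<subseteq> Up" and S: "S = Dg \<union> T" and Q: "inN2 Q"
  shows "G S Q p \<in> \<rat>"
proof -
  have fT: "finite T" using T finite_subset unfolding Up_def by auto
  have fS: "finite S" using fT S unfolding Dg_def by simp
  have SU: "S \<subseteq> U" using T S unfolding Dg_def Up_def U_def by auto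
  have disj: "Dg \<inter> T = {}" using T unfolding Dg_def Up_def by auto
  define k where "k = fst Q + snd Q"
  define K where "K = nat k"
  have kK: "k = int K" using Q unfolding K_def k_def inN2_def by simp
  have Gnot: "\<not> inN2 q \<Longrightarrow> G S Q q = 0" for q by (simp add: G_def)
  have main: "\<forall>p. inN2 p \<longrightarrow> fst p + snd p \<ge> int K + 1 - int t \<longrightarrow> G S Q p \<in> \<rat>" for t
  proof (induction t)
    case 0
    show ?case using G_zero[OF SU] kK k_def by auto
  next
    case (Suc t)
    show ?case
    proof (intro allI impI)
      fix p :: pt assume p: "inN2 p" "fst p + snd p \<ge> int K + 1 - int (Suc t)"
      show "G S Q p \<in> \<rat>"
      proof (cases "fst p + snd p \<ge> int K + 1 - int t")
        case True then show ?thesis using Suc.IH p by blast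
      next
        case False
        define j where "j = fst p + snd p"
        have j: "j = int K - int t" "j \<ge> 0" using False p unfolding j_def inN2_def by auto
        define J where "J = nat j"
        have jJ: "j = int J" using j unfolding J_def by simp
        define g where "g = (\<lambda>m::nat. if m = 0 then 0 else G S Q (j - int m + 1, int m - 1))"
        define q where "q = (\<lambda>m::nat. (j - int m, int m))"
        define c where "c = (\<lambda>m. 2 * (if q m = Q then 1 else 0) + (\<Sum>s\<in>T. G S Q (padd (q m) s)))"
        have g0: "g 0 = 0" unfolding g_def by simp
        have gL: "g (Suc (Suc J)) = 0" unfolding g_def using jJ by (simp add: Gnot inN2_def)
        have cr: "c m \<in> \<rat>" if "m < Suc J" for m
        proof -
          have "G S Q (padd (q m) s) \<in> \<rat>" if s: "s \<in> T" for s
          proof (cases "inN2 (padd (q m) s)")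
            case True
            have "fst (padd (q m) s) + snd (padd (q m) s) \<ge> int K + 1 - int t"
              using s T j unfolding Up_def padd_def q_def by auto
            then show ?thesis using Suc.IH True by blast
          qed (simp add: Gnot)
          then show ?thesis unfolding c_def by (intro Rats_add Rats_mult Rats_sum) auto
        qed
        have rec: "g (Suc (Suc m)) = 2 * g (Suc m) - c m - g m" if m: "m < Suc J" for m
        proof -
          have qm: "inN2 (q m)" using m jJ unfolding q_def inN2_def by auto
          have "G S Q (q m) = (if q m = Q then 1 else 0) + (1/2) * (\<Sum>s\<in>S. G S Q (padd (q m) s))"
            by (rule G_rec[OF fS SU Q qm])
          also have "(\<Sum>s\<in>S. G S Q (padd (q m) s)) = (\<Sum>s\<in>Dg. G S Q (padd (q m) s)) + (\<Sum>s\<in>T. G S Q (padd (q m) s))"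
            unfolding S using fT disj by (intro sum.union_disjoint) (auto simp: Dg_def)
          also have "(\<Sum>s\<in>Dg. G S Q (padd (q m) s)) = g (Suc (Suc m)) + g m"
            unfolding Dg_def g_def q_def padd_def
            by (cases "m = 0") (auto simp: Gnot inN2_def algebra_simps)
          finally have "G S Q (q m) = (if q m = Q then 1 else 0) + (1/2) * (g (Suc (Suc m)) + g m + (\<Sum>s\<in>T. G S Q (padd (q m) s)))"
            by simp
          moreover have "g (Suc m) = G S Q (q m)" unfolding g_def q_def by simp
          ultimately show ?thesis unfolding c_def by (simp add: algebra_simps)
        qed
        have "g (Suc (nat (snd p))) \<in> \<rat>"
          by (rule tridiag_rat[of g "Suc J" c]) (use g0 gL rec cr p jJ j_def inN2_def in auto)
        moreover have "g (Suc (nat (snd p))) = G S Q p"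
          using p unfolding g_def j_def inN2_def by (cases p) auto
        ultimately show ?thesis by simp
      qed
    qed
  qed
  show ?thesis
  proof (cases "inN2 p")
    case True
    then show ?thesis using main[of "Suc K"] unfolding inN2_def by (cases p) auto
  qed (simp add: Gnot)
qed


theorem proposition2p12:
  fixes S :: "pt set" and k :: nat and Q :: pt
  assumes "S \<in> {stepA, stepB, stepC, stepD, stepE}"
    and "Q \<in> diagS k"
  shows "\<exists>q\<in>\<rat>. (\<lambda>n. real (num_walks S n Q) / 2 ^ n) sums q"
proof -
  have Q: "inN2 Q" using assms(2) unfolding diagS_def inN2_def by auto
  obtain T where T: "T \<subseteq> Up" "S = Dg \<union> T"
  proof -
    from assms(1) consider "S = stepA" | "S = stepB" | "S = stepC" | "S = stepD" | "S = stepE" by blast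
    then show ?thesis
    proof cases
      case 1 show ?thesis by (rule that[of "{(1,1)}"]) (auto simp: 1 stepA_def Dg_def Up_def)
    next
      case 2 show ?thesis by (rule that[of "{(0,1),(1,0)}"]) (auto simp: 2 stepB_def Dg_def Up_def)
    next
      case 3 show ?thesis by (rule that[of "{(0,1),(1,0),(1,1)}"]) (auto simp: 3 stepC_def Dg_def Up_def)
    next
      case 4 show ?thesis by (rule that[of "{(0,1)}"]) (auto simp: 4 stepD_def Dg_def Up_def)
    next
      case 5 show ?thesis by (rule that[of "{(0,1),(1,1)}"]) (auto simp: 5 stepE_def Dg_def Up_def)
    qed
  qed
  have fT: "finite T" using T finite_subset unfolding Up_def by auto
  have fS: "finite S" using fT T unfolding Dg_def by simp
  have SU: "S \<subseteq> U" using T unfolding Dg_def Up_def U_def by auto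
  have O: "inN2 (0,0)" by (simp add: inN2_def)
  have eq: "(\<lambda>n. real (num_walks S n Q) / 2 ^ n) = (\<lambda>m. real (hw S Q m (0,0)) / 2^m)"
    using W_card[OF fS] O by (simp add: num_walks_W)
  have "(\<lambda>m. real (hw S Q m (0,0)) / 2^m) sums G S Q (0,0)"
    unfolding G_def using hw_summable[OF fS SU Q O] O by (simp add: summable_sums)
  moreover have "G S Q (0,0) \<in> \<rat>" by (rule G_rat[OF T Q])
  ultimately show ?thesis unfolding eq by blast
qed

end
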